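(* There exists a universal constant $c>0$ such that the following holds. Let $(E,d)$ be a complete separable metric space equipped with a Borel probability measure $\mu$, and let $k\geq 1$. For all sets $A_1,\ldots,A_k\subset E$ such that $\min_{i\neq j} d(A_i,A_j)>0$ and $(\mu(A_1),\ldots,\mu(A_k))\in\Delta_k$, the set $A=A_1\cup A_2\cup\cdots\cup A_k$ satisfies \[ \mu(A_r)\geq 1-(1-\mu(A))\exp\left(-c\min\left(r^2\lambda^{(k)}\,;\,r\sqrt{\lambda^{(k)}}\right)\right) \] for all $0<r\leq \frac12\min_{i\neq j} d(A_i,A_j)$.
   Context: For $A,B\subset E$, $d(A,B)=\inf\{d(x,y):x\in A,y\in B\}$. For $A\subset E$ and $r>0$, the $r$-enlargement is $A_r=\{x\in E:\exists y\in A,\ d(x,y)<r\}$. For $k\geq1$, $\Delta_k$ is the set of $(a_1,\ldots,a_k)\in[0,1]^k$ with $\sum_{j=1}^k a_j\leq 1$ and $a_i+\sum_{j=1}^k a_j\geq 1$ for every $i\in\{1,\ldots,k\}$. For $f:E\to\mathbb{R}$, the local Lipschitz constant is $|\nabla f|(x)=0$ if $x$ is isolated and $|\nabla f|(x)=\limsup_{y\to x}\frac{|f(x)-f(y)|}{d(x,y)}$ otherwise. $H^1(\mu)$ is the space of $f\in L^2(\mu)$ with $\int|\nabla f|^2\,d\mu<\infty$. For $k\geq0$, \[ \lambda^{(k)}=\inf_{V\subset H^1(\mu),\ \dim V=k+1}\ \sup_{f\in V\setminus\{0\}}\frac{\int|\nabla f|^2\,d\mu}{\int f^2\,d\mu}.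 \] *)

theory Defs
  imports "HOL-Analysis.Analysis" "HOL-Probability.Probability"
begin

definition metric_borel :: "'a set \<Rightarrow> ('a \<Rightarrow> 'a \<Rightarrow> real) \<Rightarrow> 'a set set" where
  "metric_borel E d = sigma_sets E (Collect (openin (Metric_space.mtopology E d)))"

text \<open>Distance between two sets, with the convention inf of the empty set = +infinity.\<close>
definition set_dist :: "('a \<Rightarrow> 'a \<Rightarrow> real) \<Rightarrow> 'a set \<Rightarrow> 'a set \<Rightarrow> ereal" where
  "set_dist d A B = Inf {ereal (d x y) | x y. x \<in> A \<and> y \<in> B}"

definition enlargement :: "'a set \<Rightarrow> ('a \<Rightarrow> 'a \<Rightarrow> real) \<Rightarrow> 'a set \<Rightarrow> real \<Rightarrow> 'a set" where
  "enlargement E d A r = {x \<in> E. \<exists>y\<in>A. d x y < r}"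

definition Delta :: "nat \<Rightarrow> (nat \<Rightarrow> real) set" where
  "Delta k = {a. (\<forall>i\<in>{1..k}. 0 \<le> a i \<and> a i \<le> 1) \<and> (\<Sum>j=1..k. a j) \<le> 1 \<and>
                  (\<forall>i\<in>{1..k}. a i + (\<Sum>j=1..k. a j) \<ge> 1)}"

definition isolated_pt :: "'a set \<Rightarrow> ('a \<Rightarrow> 'a \<Rightarrow> real) \<Rightarrow> 'a \<Rightarrow> bool" where
  "isolated_pt E d x \<longleftrightarrow> (\<exists>e>0. \<forall>y\<in>E. y \<noteq> x \<longrightarrow> e \<le> d x y)"

text \<open>Local Lipschitz constant: 0 at isolated points, otherwise
  limsup_{y->x} |f x - f y| / d(x,y) (written out as inf over eps of sup over the punctured ball).\<close>
definition local_lip :: "'a set \<Rightarrow> ('a \<Rightarrow> 'a \<Rightarrow> real) \<Rightarrow> ('a \<Rightarrow> real) \<Rightarrow> 'a \<Rightarrow> ennreal" where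
  "local_lip E d f x =
     (if isolated_pt E d x then 0
      else (INF e\<in>{e::real. e > 0}.
              SUP y\<in>{y\<in>E. 0 < d x y \<and> d x y < e}. ennreal (\<bar>f x - f y\<bar> / d x y)))"

definition dirichlet :: "'a set \<Rightarrow> ('a \<Rightarrow> 'a \<Rightarrow> real) \<Rightarrow> 'a measure \<Rightarrow> ('a \<Rightarrow> real) \<Rightarrow> ennreal" where
  "dirichlet E d \<mu> f = (\<integral>\<^sup>+ x. (local_lip E d f x)\<^sup>2 \<partial>\<mu>)"

definition sq_norm :: "'a measure \<Rightarrow> ('a \<Rightarrow> real) \<Rightarrow> ennreal" where
  "sq_norm \<mu> f = (\<integral>\<^sup>+ x. ennreal ((f x)\<^sup>2) \<partial>\<mu>)"

definition H1 :: "'a set \<Rightarrow> ('a \<Rightarrow> 'a \<Rightarrow> real) \<Rightarrow> 'a measure \<Rightarrow> ('a \<Rightarrow> real) set" where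
  "H1 E d \<mu> = {f. f \<in> borel_measurable \<mu> \<and> sq_norm \<mu> f < \<infinity> \<and> dirichlet E d \<mu> f < \<infinity>}"

text \<open>(k+1)-dimensional subspaces of H^1(mu) (as a subspace of L^2(mu)) are exactly the spans of
  k+1 functions g_0..g_k of H^1 that are linearly independent in L^2(mu), i.e. no nontrivial
  linear combination vanishes mu-a.e.; the nonzero elements of the span are the combinations
  with a nonzero coefficient vector.\<close>
definition L2_indep :: "'a measure \<Rightarrow> nat \<Rightarrow> (nat \<Rightarrow> 'a \<Rightarrow> real) \<Rightarrow> bool" where
  "L2_indep \<mu> k g \<longleftrightarrow>
     (\<forall>c::nat \<Rightarrow> real. (AE x in \<mu>. (\<Sum>i\<le>k. c i * g i x) = 0) \<longrightarrow> (\<forall>i\<le>k. c i = 0))"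

definition lambda_k :: "'a set \<Rightarrow> ('a \<Rightarrow> 'a \<Rightarrow> real) \<Rightarrow> 'a measure \<Rightarrow> nat \<Rightarrow> ennreal" where
  "lambda_k E d \<mu> k =
     (INF g\<in>{g. (\<forall>i\<le>k. g i \<in> H1 E d \<mu>) \<and> L2_indep \<mu> k g}.
        SUP c\<in>{c::nat \<Rightarrow> real. \<exists>i\<le>k. c i \<noteq> 0}.
          dirichlet E d \<mu> (\<lambda>x. \<Sum>i\<le>k. c i * g i x) / sq_norm \<mu> (\<lambda>x. \<Sum>i\<le>k. c i * g i x))"

text \<open>exp(-c min(r^2 lambda, r sqrt lambda)), with the value 0 when lambda = +infinity
  (inf over the empty family).\<close>
definition conc_factor :: "real \<Rightarrow> real \<Rightarrow> ennreal \<Rightarrow> real" where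
  "conc_factor c r lam =
     (if lam = \<infinity> then 0
      else exp (- c * min (r\<^sup>2 * enn2real lam) (r * sqrt (enn2real lam))))"

end

theory Submission
  imports Defs
begin


definition clamp01 :: "real \<Rightarrow> real" where "clamp01 v = min 1 (max 0 v)"

lemma clamp01_lip: "\<bar>clamp01 a - clamp01 b\<bar> \<le> \<bar>a - b\<bar>"
  unfolding clamp01_def by (simp add: min_def max_def abs_if)

lemma clamp01_ge1: "1 \<le> v \<Longrightarrow> clamp01 v = 1" unfolding clamp01_def by simp
lemma clamp01_le0: "v \<le> 0 \<Longrightarrow> clamp01 v = 0" unfolding clamp01_def by simp
lemma clamp01_range: "0 \<le> clamp01 v" "clamp01 v \<le> 1" unfolding clamp01_def by auto

context Metric_space begin

definition dS :: "'a set \<Rightarrow> 'a \<Rightarrow> real" where "dS S x = Inf ((\<lambda>y. d x y) ` S)"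

lemma dS_le: "y \<in> S \<Longrightarrow> dS S x \<le> d x y"
  unfolding dS_def by (rule cInf_lower) (auto intro: bdd_belowI[where m=0])

lemma dS_ge: "S \<noteq> {} \<Longrightarrow> (\<And>y. y \<in> S \<Longrightarrow> u \<le> d x y) \<Longrightarrow> u \<le> dS S x"
  unfolding dS_def by (rule cInf_greatest) auto

lemma dS_nonneg: "S \<noteq> {} \<Longrightarrow> 0 \<le> dS S x"
  by (rule dS_ge) auto

lemma dS_less_iff: "S \<noteq> {} \<Longrightarrow> dS S x < u \<longleftrightarrow> (\<exists>y\<in>S. d x y < u)"
  unfolding dS_def by (subst cInf_less_iff) (auto intro: bdd_belowI[where m=0])

lemma dS_zero: "x \<in> S \<Longrightarrow> S \<subseteq> M \<Longrightarrow> dS S x = 0"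
  using dS_le[of x S x] dS_nonneg[of S x] by (auto simp: subset_eq)

lemma dS_tri:
  assumes "S \<subseteq> M" "S \<noteq> {}" "x \<in> M" "z \<in> M"
  shows "dS S x \<le> d x z + dS S z"
proof -
  have "dS S x - d x z \<le> dS S z"
  proof (rule dS_ge[OF assms(2)])
    fix y assume y: "y \<in> S"
    have "dS S x \<le> d x y" by (rule dS_le[OF y])
    also have "\<dots> \<le> d x z + d z y" using triangle[of x z y] assms y by auto
    finally show "dS S x - d x z \<le> d z y" by simp
  qed
  thus ?thesis by simp
qed

lemma dS_lip:
  assumes "S \<subseteq> M" "S \<noteq> {}" "x \<in> M" "z \<in> M"
  shows "\<bar>dS S x - dS S z\<bar> \<le> d x z"
  using dS_tri[OF assms] dS_tri[OF assms(1,2,4,3)] commute[of x z] by auto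

end

lemma local_lip_le:
  assumes "\<delta> > 0" "K \<ge> 0" "\<And>y. y \<in> E \<Longrightarrow> d x y < \<delta> \<Longrightarrow> \<bar>F x - F y\<bar> \<le> K * d x y"
  shows "local_lip E d F x \<le> ennreal K"
proof (cases "isolated_pt E d x")
  case True thus ?thesis by (simp add: local_lip_def)
next
  case False
  have "local_lip E d F x \<le> (SUP y\<in>{y\<in>E. 0 < d x y \<and> d x y < \<delta>}. ennreal (\<bar>F x - F y\<bar> / d x y))"
    unfolding local_lip_def using False assms(1) by (auto intro!: INF_lower)
  also have "\<dots> \<le> ennreal K"
  proof (rule SUP_least)
    fix y assume y: "y \<in> {y\<in>E. 0 < d x y \<and> d x y < \<delta>}"
    hence "\<bar>F x - F y\<bar> / d x y \<le> K" using assms(3)[of y] by (simp add: pos_divide_le_eq)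
    thus "ennreal (\<bar>F x - F y\<bar> / d x y) \<le> ennreal K" by (rule ennreal_leI)
  qed
  finally show ?thesis .
qed


lemma decay:
  fixes S :: "real \<Rightarrow> real" and s0 l r :: real
  assumes l: "0 \<le> l" and r: "0 < r" and s0: "0 \<le> s0"
    and nn: "\<And>u. 0 \<le> S u"
    and mono: "\<And>u v. 0 < v \<Longrightarrow> v \<le> u \<Longrightarrow> S u \<le> S v"
    and le0: "\<And>u. 0 < u \<Longrightarrow> S u \<le> s0"
    and a: "\<And>\<rho>. 0 < \<rho> \<Longrightarrow> \<rho> \<le> r \<Longrightarrow> S (2*\<rho>) * (1 + l * \<rho>\<^sup>2 / 16) \<le> s0"
    and b: "\<And>\<rho> t. 0 < \<rho> \<Longrightarrow> \<rho> \<le> r \<Longrightarrow> \<rho> \<le> t \<Longrightarrow> 1 < l * \<rho>\<^sup>2 / 16 \<Longrightarrow> S (t+\<rho>) * (1 + l * \<rho>\<^sup>2 / 16) \<le> S t"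
  shows "S r \<le> s0 * exp (- (1/128) * min (r\<^sup>2 * l) (r * sqrt l))"
proof -
  define x where "x = r * sqrt l"
  have x0: "0 \<le> x" unfolding x_def using l r by simp
  have x2: "x\<^sup>2 = r\<^sup>2 * l" unfolding x_def using l by (simp add: power_mult_distrib)
  have A0: "S r * (1 + x\<^sup>2 / 64) \<le> s0"
  proof -
    have "S (2*(r/2)) * (1 + l * (r/2)\<^sup>2 / 16) \<le> s0" by (rule a) (use r in auto)
    moreover have "l * (r/2)\<^sup>2 / 16 = x\<^sup>2 / 64" unfolding x2 by (simp add: power_divide)
    ultimately show ?thesis by simp
  qed
  show ?thesis
  proof (cases "x\<^sup>2 \<le> 64")
    case True
    define y where "y = x\<^sup>2 / 64"
    have y: "0 \<le> y" "y \<le> 1" using True unfolding y_def by auto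
    have "exp (y/2) \<le> 1 + y/2 + (y/2)\<^sup>2" by (rule exp_bound) (use y in auto)
    also have "\<dots> \<le> 1 + y"
    proof -
      have "y * y \<le> y" using y by (simp add: mult_left_le)
      moreover have "(y/2)\<^sup>2 = y * y / 4" by (simp add: power2_eq_square)
      ultimately show ?thesis using y by linarith
    qed
    finally have ey: "exp (y/2) \<le> 1 + y" .
    have y1: "0 < 1 + y" using y by simp
    have "S r \<le> s0 / (1 + y)" unfolding pos_le_divide_eq[OF y1] using A0 by (simp add: y_def)
    also have "\<dots> \<le> s0 / exp (y/2)" using ey s0 y1 by (intro divide_left_mono) auto
    also have "s0 / exp (y/2) = s0 * exp (- (1/128) * (r\<^sup>2 * l))"
    proof -
      have h: "y/2 = (1/128) * (r\<^sup>2 * l)" by (simp add: y_def x2)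
      have "s0 / exp (y/2) = s0 * exp (- (y/2))" by (simp only: exp_minus divide_inverse)
      also have "- (y/2) = - (1/128) * (r\<^sup>2 * l)" unfolding h by simp
      finally show ?thesis .
    qed
    also have "\<dots> \<le> s0 * exp (- (1/128) * min (r\<^sup>2 * l) (r * sqrt l))"
      using s0 by (intro mult_left_mono) auto
    finally show ?thesis .
  next
    case False
    have x8: "8 < x"
    proof (rule ccontr)
      assume "\<not> 8 < x"
      hence "x\<^sup>2 \<le> 8\<^sup>2" using x0 by (intro power_mono) auto
      thus False using False by simp
    qed
    have mn: "min (r\<^sup>2 * l) (r * sqrt l) = x"
    proof -
      have "x * 1 < x * x" using x8 by (intro mult_strict_left_mono) auto
      hence "x < r\<^sup>2 * l" unfolding x2[symmetric] by (simp add: power2_eq_square)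
      thus ?thesis unfolding x_def by simp
    qed
    have Sr: "0 \<le> S r" by (rule nn)
    show ?thesis
    proof (cases "x \<le> 64")
      case True
      have "S r * 2 \<le> S r * (1 + x\<^sup>2 / 64)" using False Sr by (intro mult_left_mono) auto
      hence h: "S r \<le> s0 / 2" using A0 by simp
      have "1 + (- 1/2) \<le> exp (- 1/2 :: real)" by (rule exp_ge_add_one_self)
      also have "exp (- 1/2 :: real) \<le> exp (- (1/128) * x)" using True by simp
      finally have "1/2 \<le> exp (- (1/128) * x)" by simp
      hence "s0 / 2 \<le> s0 * exp (- (1/128) * x)" using s0 mult_left_mono[of "1/2" _ s0] by simp
      thus ?thesis using h mn by simp
    next
      case False
      have sl: "0 < sqrt l" using x8 unfolding x_def using r l by (cases "l = 0") auto
      define \<rho> where "\<rho> = 8 / sqrt l"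
      have rho: "0 < \<rho>" unfolding \<rho>_def using sl by simp
      have L4: "l * \<rho>\<^sup>2 / 16 = 4" unfolding \<rho>_def using sl l by (simp add: power_divide)
      have xr: "x / 8 * \<rho> = r" unfolding x_def \<rho>_def using sl by simp
      have "1 * \<rho> \<le> (x/8) * \<rho>" by (rule mult_right_mono) (use x8 rho in auto)
      hence rho_r: "\<rho> \<le> r" using xr by simp
      have claim: "1 \<le> n \<Longrightarrow> real n * \<rho> \<le> r \<Longrightarrow> S (real n * \<rho>) \<le> s0 * (1/5)^(n-1)" for n
      proof (induction n)
        case 0 thus ?case by simp
      next
        case (Suc n)
        show ?case
        proof (cases "n = 0")
          case True thus ?thesis using le0[OF rho] by simp
        next
          case False
          have "real n * \<rho> \<le> real (Suc n) * \<rho>" by (rule mult_right_mono) (use rho in auto)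
          hence nr: "real n * \<rho> \<le> r" using Suc.prems by linarith
          have IH: "S (real n * \<rho>) \<le> s0 * (1/5)^(n-1)" using Suc.IH False nr by simp
          have "\<rho> \<le> real n * \<rho>" using False rho by simp
          have "S (real n * \<rho> + \<rho>) * (1 + l * \<rho>\<^sup>2 / 16) \<le> S (real n * \<rho>)"
            by (rule b[OF rho rho_r \<open>\<rho> \<le> real n * \<rho>\<close>]) (use L4 in simp)
          moreover have "real (Suc n) * \<rho> = real n * \<rho> + \<rho>" by (simp add: distrib_right)
          ultimately have "S (real (Suc n) * \<rho>) * 5 \<le> s0 * (1/5)^(n-1)" using IH L4 by simp
          hence "S (real (Suc n) * \<rho>) \<le> s0 * (1/5)^(n-1) / 5" by simp
          also have "\<dots> = s0 * (1/5)^(Suc n - 1)" using False by (cases n) auto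
          finally show ?thesis .
        qed
      qed
      define N where "N = nat \<lfloor>x/8\<rfloor>"
      have NN: "real N = of_int \<lfloor>x/8\<rfloor>" unfolding N_def using x0 by simp
      have N1: "real N \<le> x/8" "x/8 - 1 < real N"
        unfolding NN using of_int_floor_le[of "x/8"] real_of_int_floor_gt_diff_one[of "x/8"] by auto
      have Nge: "1 \<le> N" using N1 x8 by linarith
      have "real N * \<rho> \<le> x/8 * \<rho>" by (rule mult_right_mono[OF N1(1)]) (use rho in simp)
      hence Nr: "real N * \<rho> \<le> r" using xr by simp
      have "S r \<le> S (real N * \<rho>)" by (rule mono) (use Nge rho Nr in auto)
      also have "\<dots> \<le> s0 * (1/5)^(N-1)" by (rule claim[OF Nge Nr])
      also have "(1/5::real)^(N-1) \<le> exp (-1) ^ (N-1)"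
      proof (rule power_mono)
        have "exp (1::real) \<le> 1 + 1 + 1\<^sup>2" by (rule exp_bound) auto
        hence "1/5 \<le> inverse (exp (1::real))" by (simp add: field_simps)
        thus "1/5 \<le> exp (-1::real)" by (simp add: exp_minus)
      qed auto
      also have "exp (-1) ^ (N-1) = exp (real (N-1) * (-1))" by (rule exp_of_nat_mult[symmetric])
      also have "\<dots> \<le> exp (- (1/128) * x)"
      proof -
        have "real (N-1) = real N - 1" using Nge by (simp add: of_nat_diff)
        hence "real (N-1) * (-1) \<le> - (1/128) * x" using N1 False by linarith
        thus ?thesis by simp
      qed
      finally have "S r \<le> s0 * exp (- (1/128) * x)" using s0 by (simp add: mult_left_mono)
      thus ?thesis using mn by simp
    qed
  qed
qed


locale Conc = Metric_space E d for E and d +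
  fixes \<mu> :: "'a measure" and k :: nat and A :: "nat \<Rightarrow> 'a set" and r :: real
  assumes sp: "space \<mu> = E" and sets_eq: "sets \<mu> = metric_borel E d" and probsp: "prob_space \<mu>"
    and Ameas: "\<And>i. i \<in> {1..k} \<Longrightarrow> A i \<in> sets \<mu>"
    and sep: "\<And>i j. i \<in> {1..k} \<Longrightarrow> j \<in> {1..k} \<Longrightarrow> i \<noteq> j \<Longrightarrow> ereal (2*r) \<le> set_dist d (A i) (A j)"
    and delta: "(\<lambda>i. measure \<mu> (A i)) \<in> Delta k" and rpos: "0 < r" and k1: "1 \<le> k"
begin

sublocale P: prob_space \<mu> by (rule probsp)

definition AA where "AA = (\<Union>i\<in>{1..k}. A i)"
definition enl where "enl u = enlargement E d AA u"
definition s0 where "s0 = 1 - measure \<mu> AA"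
definition SS where "SS u = 1 - measure \<mu> (enl u)"

lemma A_sub: "i \<in> {1..k} \<Longrightarrow> A i \<subseteq> E"
  using sets.sets_into_space[OF Ameas] sp by auto

lemma AA_meas: "AA \<in> sets \<mu>" unfolding AA_def using Ameas by auto

lemma AA_sub: "AA \<subseteq> E" unfolding AA_def using A_sub by blast

lemma open_meas: "openin mtopology U \<Longrightarrow> U \<in> sets \<mu>"
  unfolding sets_eq metric_borel_def by (auto intro: sigma_sets.Basic)

lemma lip_meas:
  assumes "K \<ge> 0" "\<And>x y. x \<in> E \<Longrightarrow> y \<in> E \<Longrightarrow> \<bar>f x - f y\<bar> \<le> K * d x y"
  shows "f \<in> borel_measurable \<mu>"
  unfolding borel_measurable_iff_less
proof
  fix a
  have "openin mtopology {w \<in> E. f w < a}"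
    unfolding openin_mtopology
  proof (intro conjI allI impI)
    fix x assume x: "x \<in> {w \<in> E. f w < a}"
    define e where "e = (a - f x) / (K + 1)"
    have e: "e > 0" using x assms(1) by (auto simp: e_def)
    have "mball x e \<subseteq> {w \<in> E. f w < a}"
    proof
      fix y assume y: "y \<in> mball x e"
      have "f y \<le> f x + K * d x y" using assms(2)[of x y] y by auto
      also have "K * d x y \<le> K * e" using y assms(1) by (auto intro!: mult_left_mono)
      also have "K * e < a - f x"
        using x assms(1) by (auto simp: e_def field_simps)
      finally show "y \<in> {w \<in> E. f w < a}" using y by auto
    qed
    thus "\<exists>r>0. mball x r \<subseteq> {w \<in> E. f w < a}" using e by blast
  qed auto
  thus "{w \<in> space \<mu>. f w < a} \<in> sets \<mu>" using open_meas sp by simp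
qed

lemma enl_open: "S \<subseteq> E \<Longrightarrow> openin mtopology (enlargement E d S u)"
  unfolding openin_mtopology enlargement_def
proof (intro conjI allI impI)
  fix x assume S: "S \<subseteq> E" and x: "x \<in> {x \<in> E. \<exists>y\<in>S. d x y < u}"
  then obtain y where y: "y \<in> S" "d x y < u" by auto
  have "mball x (u - d x y) \<subseteq> {x \<in> E. \<exists>y\<in>S. d x y < u}"
  proof
    fix z assume z: "z \<in> mball x (u - d x y)"
    have "d z y \<le> d z x + d x y" using triangle[of z x y] z y S by auto
    also have "\<dots> < u" using z commute[of z x] by auto
    finally show "z \<in> {x \<in> E. \<exists>y\<in>S. d x y < u}" using z y by auto
  qed
  thus "\<exists>r>0. mball x r \<subseteq> {x \<in> E. \<exists>y\<in>S. d x y < u}" using y by (intro exI[of _ "u - d x y"]) auto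
qed auto

lemma enl_meas: "enl u \<in> sets \<mu>"
  unfolding enl_def by (rule open_meas[OF enl_open[OF AA_sub]])

lemma enl_sub: "enl u \<subseteq> E" unfolding enl_def enlargement_def by auto

lemma AA_sub_enl: "0 < u \<Longrightarrow> AA \<subseteq> enl u"
  unfolding enl_def enlargement_def using AA_sub by force

lemma enl_mono: "v \<le> u \<Longrightarrow> enl v \<subseteq> enl u"
  unfolding enl_def enlargement_def by force

lemma sep_pt:
  assumes "i \<in> {1..k}" "j \<in> {1..k}" "i \<noteq> j" "a \<in> A i" "b \<in> A j"
  shows "2 * r \<le> d a b"
proof -
  have "set_dist d (A i) (A j) \<le> ereal (d a b)"
    unfolding set_dist_def using assms(4,5) by (auto intro!: Inf_lower)
  from order_trans[OF sep[OF assms(1-3)] this] show ?thesis by simp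
qed

lemma A_disj: "i \<in> {1..k} \<Longrightarrow> j \<in> {1..k} \<Longrightarrow> i \<noteq> j \<Longrightarrow> A i \<inter> A j = {}"
  using sep_pt rpos A_sub by fastforce

lemma sep_dS:
  assumes "i \<in> {1..k}" "j \<in> {1..k}" "i \<noteq> j" "A i \<noteq> {}" "A j \<noteq> {}" "y \<in> E"
  shows "2 * r \<le> dS (A i) y + dS (A j) y"
proof -
  have "2 * r - dS (A i) y \<le> dS (A j) y"
  proof (rule dS_ge[OF assms(5)])
    fix b assume b: "b \<in> A j"
    have "2 * r - d y b \<le> dS (A i) y"
    proof (rule dS_ge[OF assms(4)])
      fix a assume a: "a \<in> A i"
      have "2 * r \<le> d a b" by (rule sep_pt[OF assms(1-3) a b])
      also have "\<dots> \<le> d a y + d y b" using triangle[of a y b] a b assms A_sub by auto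
      finally show "2 * r - d y b \<le> d y a" using commute[of a y] by simp
    qed
    thus "2 * r - dS (A i) y \<le> d y b" by simp
  qed
  thus ?thesis by simp
qed

lemma measure_AA: "measure \<mu> AA = (\<Sum>i\<in>{1..k}. measure \<mu> (A i))"
  unfolding AA_def
  by (rule P.finite_measure_finite_Union) (use Ameas A_disj in \<open>auto simp: disjoint_family_on_def\<close>)

lemma Ai_ge: assumes "i \<in> {1..k}" shows "s0 \<le> measure \<mu> (A i)"
proof -
  have "1 \<le> measure \<mu> (A i) + (\<Sum>j=1..k. measure \<mu> (A j))" using delta assms unfolding Delta_def by auto
  thus ?thesis unfolding s0_def measure_AA by simp
qed

lemma s0_nonneg: "0 \<le> s0" unfolding s0_def by simp

lemma SS_nonneg: "0 \<le> SS u" unfolding SS_def by simp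

lemma SS_le_s0: "0 < u \<Longrightarrow> SS u \<le> s0"
  unfolding SS_def s0_def using P.finite_measure_mono[OF AA_sub_enl enl_meas] by auto

lemma SS_mono: "v \<le> u \<Longrightarrow> SS u \<le> SS v"
  unfolding SS_def using P.finite_measure_mono[OF enl_mono enl_meas] by auto


lemma nn_sum_ind:
  assumes "finite I" "\<And>i. i \<in> I \<Longrightarrow> X i \<in> sets \<mu>" "\<And>i. i \<in> I \<Longrightarrow> 0 \<le> a i"
  shows "(\<integral>\<^sup>+x. ennreal (\<Sum>i\<in>I. a i * indicator (X i) x) \<partial>\<mu>) = ennreal (\<Sum>i\<in>I. a i * measure \<mu> (X i))"
  using assms
proof (induction I rule: finite_induct)
  case empty
  then show ?case by simp
next
  case (insert j I)
  have nn: "0 \<le> (\<Sum>i\<in>I. a i * indicator (X i) x)" for x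
    using insert by (auto intro!: sum_nonneg)
  have "(\<integral>\<^sup>+x. ennreal (\<Sum>i\<in>insert j I. a i * indicator (X i) x) \<partial>\<mu>)
      = (\<integral>\<^sup>+x. ennreal (a j) * indicator (X j) x + ennreal (\<Sum>i\<in>I. a i * indicator (X i) x) \<partial>\<mu>)"
  proof (rule nn_integral_cong)
    fix x
    have "ennreal (\<Sum>i\<in>insert j I. a i * indicator (X i) x) = ennreal (a j * indicator (X j) x + (\<Sum>i\<in>I. a i * indicator (X i) x))"
      using insert(1,2) by (subst sum.insert) auto
    also have "\<dots> = ennreal (a j * indicator (X j) x) + ennreal (\<Sum>i\<in>I. a i * indicator (X i) x)"
      by (rule ennreal_plus) (use insert nn in auto)
    also have "ennreal (a j * indicator (X j) x) = ennreal (a j) * indicator (X j) x"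
      using insert by (simp add: ennreal_mult' ennreal_indicator)
    finally show "ennreal (\<Sum>i\<in>insert j I. a i * indicator (X i) x) = ennreal (a j) * indicator (X j) x + ennreal (\<Sum>i\<in>I. a i * indicator (X i) x)" .
  qed
  also have "\<dots> = (\<integral>\<^sup>+x. ennreal (a j) * indicator (X j) x \<partial>\<mu>) + (\<integral>\<^sup>+x. ennreal (\<Sum>i\<in>I. a i * indicator (X i) x) \<partial>\<mu>)"
  proof (rule nn_integral_add)
    have "(\<lambda>x. (\<Sum>i\<in>I. a i * indicator (X i) x)) \<in> borel_measurable \<mu>"
      using insert by (intro borel_measurable_sum borel_measurable_times borel_measurable_const borel_measurable_indicator) auto
    thus "(\<lambda>x. ennreal (\<Sum>i\<in>I. a i * indicator (X i) x)) \<in> borel_measurable \<mu>" by measurable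
  qed (use insert in auto)
  also have "\<dots> = ennreal (a j) * emeasure \<mu> (X j) + ennreal (\<Sum>i\<in>I. a i * measure \<mu> (X i))"
    using insert by (simp add: nn_integral_cmult_indicator)
  also have "\<dots> = ennreal (\<Sum>i\<in>insert j I. a i * measure \<mu> (X i))"
    using insert by (simp add: P.emeasure_eq_measure ennreal_mult'[symmetric] sum_nonneg ennreal_plus[symmetric] del: ennreal_plus)
  finally show ?case .
qed


context
  fixes \<rho> t :: real
  assumes rho_pos: "0 < \<rho>" and rho_le: "\<rho> \<le> r" and rho_t: "\<rho> \<le> t"
    and s0_pos: "0 < s0" and St_pos: "0 < SS (t+\<rho>)"
begin

lemma t_pos: "0 < t" using rho_pos rho_t by simp

lemma A_ne: "i \<in> {1..k} \<Longrightarrow> A i \<noteq> {}" using Ai_ge[of i] s0_pos by auto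

lemma enlt_ne: "enl t \<noteq> {}"
  using AA_sub_enl[OF t_pos] A_ne[of 1] k1 unfolding AA_def by auto

definition gi :: "nat \<Rightarrow> 'a \<Rightarrow> real" where "gi i x = clamp01 (2 - 4 * dS (A i) x / \<rho>)"
definition g0 :: "'a \<Rightarrow> real" where "g0 x = clamp01 (4 * dS (enl t) x / \<rho> - 1)"
definition g :: "nat \<Rightarrow> 'a \<Rightarrow> real" where "g j = (if j = 0 then g0 else gi j)"
definition F :: "(nat \<Rightarrow> real) \<Rightarrow> 'a \<Rightarrow> real" where "F c x = (\<Sum>j\<le>k. c j * g j x)"
definition X :: "nat \<Rightarrow> 'a set" where "X j = (if j = 0 then E - enl (t+\<rho>) else A j)"

lemma gi_lip:
  assumes "i \<in> {1..k}" "x \<in> E" "y \<in> E"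
  shows "\<bar>gi i x - gi i y\<bar> \<le> 4/\<rho> * d x y"
proof -
  have "\<bar>gi i x - gi i y\<bar> \<le> \<bar>(2 - 4 * dS (A i) x / \<rho>) - (2 - 4 * dS (A i) y / \<rho>)\<bar>"
    unfolding gi_def by (rule clamp01_lip)
  also have "(2 - 4 * dS (A i) x / \<rho>) - (2 - 4 * dS (A i) y / \<rho>) = 4/\<rho> * (dS (A i) y - dS (A i) x)"
    using rho_pos by (simp add: field_simps)
  also have "\<bar>4/\<rho> * (dS (A i) y - dS (A i) x)\<bar> = 4/\<rho> * \<bar>dS (A i) x - dS (A i) y\<bar>"
    using rho_pos by (subst abs_mult) (simp only: abs_minus_commute[of "dS (A i) y"], simp)
  also have "\<dots> \<le> 4/\<rho> * d x y"
    using dS_lip[OF A_sub[OF assms(1)] A_ne[OF assms(1)] assms(2,3)] rho_pos by (intro mult_left_mono) auto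
  finally show ?thesis .
qed

lemma g0_lip:
  assumes "x \<in> E" "y \<in> E"
  shows "\<bar>g0 x - g0 y\<bar> \<le> 4/\<rho> * d x y"
proof -
  have "\<bar>g0 x - g0 y\<bar> \<le> \<bar>(4 * dS (enl t) x / \<rho> - 1) - (4 * dS (enl t) y / \<rho> - 1)\<bar>"
    unfolding g0_def by (rule clamp01_lip)
  also have "(4 * dS (enl t) x / \<rho> - 1) - (4 * dS (enl t) y / \<rho> - 1) = 4/\<rho> * (dS (enl t) x - dS (enl t) y)"
    using rho_pos by (simp add: field_simps)
  also have "\<bar>4/\<rho> * (dS (enl t) x - dS (enl t) y)\<bar> = 4/\<rho> * \<bar>dS (enl t) x - dS (enl t) y\<bar>"
    using rho_pos by (subst abs_mult) simp
  also have "\<dots> \<le> 4/\<rho> * d x y"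
    using dS_lip[OF enl_sub enlt_ne assms] rho_pos by (intro mult_left_mono) auto
  finally show ?thesis .
qed

lemma g_lip: "j \<le> k \<Longrightarrow> x \<in> E \<Longrightarrow> y \<in> E \<Longrightarrow> \<bar>g j x - g j y\<bar> \<le> 4/\<rho> * d x y"
  unfolding g_def using gi_lip[of j x y] g0_lip[of x y] by auto

lemma g_range: "0 \<le> g j x" "g j x \<le> 1"
  unfolding g_def gi_def g0_def using clamp01_range by auto

lemma gi_zero: "\<rho>/2 \<le> dS (A i) y \<Longrightarrow> gi i y = 0"
  unfolding gi_def using rho_pos by (intro clamp01_le0) (simp add: field_simps)
lemma gi_one: "dS (A i) y \<le> \<rho>/4 \<Longrightarrow> gi i y = 1"
  unfolding gi_def using rho_pos by (intro clamp01_ge1) (simp add: field_simps)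
lemma g0_zero: "dS (enl t) y \<le> \<rho>/4 \<Longrightarrow> g0 y = 0"
  unfolding g0_def using rho_pos by (intro clamp01_le0) (simp add: field_simps)
lemma g0_one: "\<rho>/2 \<le> dS (enl t) y \<Longrightarrow> g0 y = 1"
  unfolding g0_def using rho_pos by (intro clamp01_ge1) (simp add: field_simps)

lemma F_single:
  assumes "i \<le> k" "\<And>j. j \<le> k \<Longrightarrow> j \<noteq> i \<Longrightarrow> g j y = 0"
  shows "F c y = c i * g i y"
proof -
  have "F c y = (\<Sum>j\<le>k. if j = i then c i * g i y else 0)"
    unfolding F_def by (rule sum.cong) (use assms in auto)
  also have "\<dots> = c i * g i y" using assms(1) by simp
  finally show ?thesis .
qed

lemma near_i:
  assumes i: "i \<in> {1..k}" and y: "y \<in> E" and lt: "dS (A i) y < \<rho>"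
  shows "F c y = c i * gi i y"
proof -
  have "F c y = c i * g i y"
  proof (rule F_single)
    show "i \<le> k" using i by auto
    fix j assume j: "j \<le> k" "j \<noteq> i"
    show "g j y = 0"
    proof (cases "j = 0")
      case True
      obtain a where a: "a \<in> A i" "d y a < \<rho>" using lt dS_less_iff[OF A_ne[OF i]] by auto
      have "a \<in> AA" using a i unfolding AA_def by auto
      hence "y \<in> enl t" using a y rho_t unfolding enl_def enlargement_def by force
      hence "dS (enl t) y = 0" by (rule dS_zero[OF _ enl_sub])
      thus ?thesis using True g0_zero rho_pos unfolding g_def by simp
    next
      case False
      hence j1: "j \<in> {1..k}" using j by auto
      have "2 * r \<le> dS (A i) y + dS (A j) y" by (rule sep_dS[OF i j1 _ A_ne[OF i] A_ne[OF j1] y]) (use j in auto)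
      hence "\<rho>/2 \<le> dS (A j) y" using lt rho_le rho_pos by linarith
      thus ?thesis using False gi_zero unfolding g_def by simp
    qed
  qed
  thus ?thesis using i unfolding g_def by auto
qed

lemma far_all:
  assumes "\<And>i. i \<in> {1..k} \<Longrightarrow> \<rho>/2 \<le> dS (A i) y"
  shows "F c y = c 0 * g0 y"
proof -
  have "F c y = c 0 * g 0 y"
    by (rule F_single) (use assms gi_zero in \<open>auto simp: g_def\<close>)
  thus ?thesis by (simp add: g_def)
qed

lemma out_far:
  assumes x: "x \<in> E - enl (t+\<rho>)"
  shows "\<rho> \<le> dS (enl t) x" "\<And>i. i \<in> {1..k} \<Longrightarrow> \<rho> \<le> dS (A i) x"
proof -
  show "\<rho> \<le> dS (enl t) x"
  proof (rule ccontr)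
    assume "\<not> \<rho> \<le> dS (enl t) x"
    hence "dS (enl t) x < \<rho>" by simp
    then obtain y where y: "y \<in> enl t" "d x y < \<rho>" using dS_less_iff[OF enlt_ne] by blast
    then obtain a where a: "a \<in> AA" "d y a < t" "y \<in> E" unfolding enl_def enlargement_def by auto
    have "d x a \<le> d x y + d y a" using triangle[of x y a] a x AA_sub by auto
    hence "x \<in> enl (t+\<rho>)" using a y x unfolding enl_def enlargement_def by force
    thus False using x by auto
  qed
  fix i assume i: "i \<in> {1..k}"
  show "\<rho> \<le> dS (A i) x"
  proof (rule ccontr)
    assume "\<not> \<rho> \<le> dS (A i) x"
    hence "dS (A i) x < \<rho>" by simp
    then obtain a where a: "a \<in> A i" "d x a < \<rho>" using dS_less_iff[OF A_ne[OF i]] by blast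
    have "a \<in> AA" using a i unfolding AA_def by auto
    hence "x \<in> enl (t+\<rho>)" using a x t_pos unfolding enl_def enlargement_def by force
    thus False using x by auto
  qed
qed

lemma F_X:
  assumes j: "j \<le> k" and x: "x \<in> X j"
  shows "F c x = c j"
proof (cases "j = 0")
  case True
  hence x': "x \<in> E - enl (t+\<rho>)" using x unfolding X_def by auto
  have "F c x = c 0 * g0 x"
    by (rule far_all) (use out_far(2)[OF x'] rho_pos in force)
  also have "g0 x = 1" by (rule g0_one) (use out_far(1)[OF x'] rho_pos in simp)
  finally show ?thesis using True by simp
next
  case False
  hence j1: "j \<in> {1..k}" using j by auto
  have xa: "x \<in> A j" using x False unfolding X_def by auto
  have xE: "x \<in> E" using xa A_sub[OF j1] by auto
  have dz: "dS (A j) x = 0" by (rule dS_zero[OF xa A_sub[OF j1]])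
  have "F c x = c j * gi j x" by (rule near_i[OF j1 xE]) (use dz rho_pos in simp)
  also have "gi j x = 1" by (rule gi_one) (use dz rho_pos in simp)
  finally show ?thesis by simp
qed

lemma X_meas: "j \<le> k \<Longrightarrow> X j \<in> sets \<mu>"
  unfolding X_def using enl_meas sp Ameas by (auto intro!: sets.compl_sets)

lemma X_sub: "j \<le> k \<Longrightarrow> X j \<subseteq> E"
  unfolding X_def using A_sub by auto

lemma X_disj:
  assumes "j \<le> k" "j' \<le> k" "j \<noteq> j'" "x \<in> X j"
  shows "x \<notin> X j'"
proof -
  have "AA \<subseteq> enl (t+\<rho>)" by (rule AA_sub_enl) (use t_pos rho_pos in simp)
  hence sub: "i \<in> {1..k} \<Longrightarrow> A i \<subseteq> enl (t+\<rho>)" for i unfolding AA_def by blast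
  show ?thesis
    using assms A_disj[of j j'] sub[of j] sub[of j'] unfolding X_def
    by (cases "j = 0"; cases "j' = 0") auto
qed

lemma measure_X0: "measure \<mu> (X 0) = SS (t+\<rho>)"
  unfolding X_def SS_def using P.prob_compl[OF enl_meas] sp by simp

lemma measure_X_pos: "j \<le> k \<Longrightarrow> 0 < measure \<mu> (X j)"
  using measure_X0 St_pos Ai_ge s0_pos unfolding X_def
  by (cases "j = 0") (auto intro: less_le_trans)

definition D :: "(nat \<Rightarrow> real) \<Rightarrow> real" where "D c = (\<Sum>j\<le>k. (c j)\<^sup>2 * measure \<mu> (X j))"

lemma sq_lower:
  assumes x: "x \<in> E"
  shows "(\<Sum>j\<le>k. (c j)\<^sup>2 * indicator (X j) x) \<le> (F c x)\<^sup>2"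
proof (cases "\<exists>j\<le>k. x \<in> X j")
  case True
  then obtain j where j: "j \<le> k" "x \<in> X j" by auto
  have "(\<Sum>i\<le>k. (c i)\<^sup>2 * indicator (X i) x) = (\<Sum>i\<le>k. if i = j then (c j)\<^sup>2 else 0)"
    by (rule sum.cong) (use j X_disj[of j] in auto)
  also have "\<dots> = (c j)\<^sup>2" using j by simp
  also have "\<dots> = (F c x)\<^sup>2" using F_X[OF j] by simp
  finally show ?thesis by simp
next
  case False
  hence "(\<Sum>i\<le>k. (c i)\<^sup>2 * indicator (X i) x) = 0" by (intro sum.neutral) auto
  thus ?thesis by simp
qed

lemma F_eta: "F c = (\<lambda>x. \<Sum>i\<le>k. c i * g i x)"
  by (rule ext) (simp add: F_def)

lemma sq_ge: "ennreal (D c) \<le> sq_norm \<mu> (F c)"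
proof -
  have "ennreal (D c) = (\<integral>\<^sup>+x. ennreal (\<Sum>j\<le>k. (c j)\<^sup>2 * indicator (X j) x) \<partial>\<mu>)"
    unfolding D_def by (rule nn_sum_ind[symmetric]) (auto intro: X_meas)
  also have "\<dots> \<le> sq_norm \<mu> (F c)"
    unfolding sq_norm_def by (rule nn_integral_mono) (use sq_lower sp in auto)
  finally show ?thesis .
qed

lemma D_pos: assumes "\<exists>i\<le>k. c i \<noteq> 0" shows "0 < D c"
proof -
  obtain i where i: "i \<le> k" "c i \<noteq> 0" using assms by auto
  show ?thesis unfolding D_def
    by (rule sum_pos2[of _ i]) (use i measure_X_pos in auto)
qed

lemma g_H1: assumes j: "j \<le> k" shows "g j \<in> H1 E d \<mu>"
proof -
  have meas: "g j \<in> borel_measurable \<mu>"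
    by (rule lip_meas[of "4/\<rho>"]) (use rho_pos g_lip[OF j] in auto)
  have "sq_norm \<mu> (g j) \<le> (\<integral>\<^sup>+x. 1 \<partial>\<mu>)"
    unfolding sq_norm_def
  proof (rule nn_integral_mono)
    fix x
    have "(g j x)\<^sup>2 \<le> 1" using g_range[of j x] by (simp add: power_le_one)
    thus "ennreal ((g j x)\<^sup>2) \<le> 1" by (simp add: ennreal_le_1)  
  qed
  also have "\<dots> < \<infinity>" by (simp add: P.emeasure_space_1)
  finally have sq: "sq_norm \<mu> (g j) < \<infinity>" .
  have "dirichlet E d \<mu> (g j) \<le> (\<integral>\<^sup>+x. ennreal ((4/\<rho>)\<^sup>2) \<partial>\<mu>)"
    unfolding dirichlet_def
  proof (rule nn_integral_mono)
    fix x assume x: "x \<in> space \<mu>"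
    have "local_lip E d (g j) x \<le> ennreal (4/\<rho>)"
      by (rule local_lip_le[of 1]) (use rho_pos g_lip[OF j] x sp in auto)
    hence "(local_lip E d (g j) x)\<^sup>2 \<le> (ennreal (4/\<rho>))\<^sup>2" by (rule power_mono) simp
    thus "(local_lip E d (g j) x)\<^sup>2 \<le> ennreal ((4/\<rho>)\<^sup>2)" using rho_pos by (simp add: ennreal_power)
  qed
  also have "\<dots> < \<infinity>" by (simp add: P.emeasure_space_1)
  finally have dir: "dirichlet E d \<mu> (g j) < \<infinity>" .
  show ?thesis unfolding H1_def using meas sq dir by auto
qed

lemma indep: "L2_indep \<mu> k g"
  unfolding L2_indep_def
proof (rule allI, rule impI)
  fix c :: "nat \<Rightarrow> real"
  assume ae: "AE x in \<mu>. (\<Sum>i\<le>k. c i * g i x) = 0"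
  show "\<forall>i\<le>k. c i = 0"
  proof (rule ccontr)
    assume "\<not> (\<forall>i\<le>k. c i = 0)"
    hence pos: "0 < D c" using D_pos by auto
    have "sq_norm \<mu> (F c) = (\<integral>\<^sup>+x. 0 \<partial>\<mu>)"
      unfolding sq_norm_def by (rule nn_integral_cong_AE) (use ae in \<open>auto simp: F_def\<close>)
    hence "ennreal (D c) \<le> 0" using sq_ge[of c] by simp
    thus False using pos by simp
  qed
qed


definition R1 where "R1 = enl \<rho> - AA"
definition R0 where "R0 = enl (t+\<rho>) - enl t"
definition S1 :: "(nat \<Rightarrow> real) \<Rightarrow> real" where "S1 c = (\<Sum>i\<in>{1..k}. (c i)\<^sup>2)"
definition B :: "(nat \<Rightarrow> real) \<Rightarrow> 'a \<Rightarrow> real" where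
  "B c x = 16/\<rho>\<^sup>2 * (c 0)\<^sup>2 * indicator R0 x + 16/\<rho>\<^sup>2 * S1 c * indicator R1 x"

lemma S1_nonneg: "0 \<le> S1 c" unfolding S1_def by (auto intro: sum_nonneg)

lemma B_nonneg: "0 \<le> B c x" unfolding B_def using S1_nonneg[of c] by auto

lemma lip_from:
  assumes "local_lip E d (F c) x \<le> ennreal K" "0 \<le> K" "K\<^sup>2 \<le> B c x"
  shows "(local_lip E d (F c) x)\<^sup>2 \<le> ennreal (B c x)"
proof -
  have "(local_lip E d (F c) x)\<^sup>2 \<le> (ennreal K)\<^sup>2" by (rule power_mono[OF assms(1)]) simp
  also have "\<dots> = ennreal (K\<^sup>2)" using assms(2) by (simp add: ennreal_power)
  also have "\<dots> \<le> ennreal (B c x)" using assms(3) by (rule ennreal_leI)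
  finally show ?thesis .
qed

lemma lin_near:
  assumes "\<delta> > 0" "\<And>y. y \<in> E \<Longrightarrow> \<bar>h x - h y\<bar> \<le> 4/\<rho> * d x y"
    "\<And>y. y \<in> E \<Longrightarrow> d x y < \<delta> \<Longrightarrow> F c y = cc * h y" "F c x = cc * h x"
  shows "local_lip E d (F c) x \<le> ennreal (4/\<rho> * \<bar>cc\<bar>)"
proof (rule local_lip_le[OF assms(1)])
  show "0 \<le> 4/\<rho> * \<bar>cc\<bar>" using rho_pos by simp
  fix y assume y: "y \<in> E" "d x y < \<delta>"
  have "\<bar>F c x - F c y\<bar> = \<bar>cc\<bar> * \<bar>h x - h y\<bar>"
    using assms(3)[OF y] assms(4) by (simp add: abs_mult[symmetric] right_diff_distrib)
  also have "\<dots> \<le> \<bar>cc\<bar> * (4/\<rho> * d x y)" by (rule mult_left_mono[OF assms(2)[OF y(1)]]) simp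
  finally show "\<bar>F c x - F c y\<bar> \<le> 4/\<rho> * \<bar>cc\<bar> * d x y" by (simp add: mult_ac)
qed

lemma const_near:
  assumes "\<delta> > 0" "\<And>y. y \<in> E \<Longrightarrow> d x y < \<delta> \<Longrightarrow> F c y = F c x"
  shows "local_lip E d (F c) x \<le> ennreal 0"
  by (rule local_lip_le[OF assms(1)]) (use assms(2) in auto)

lemma ll_bound:
  assumes x: "x \<in> E"
  shows "(local_lip E d (F c) x)\<^sup>2 \<le> ennreal (B c x)"
proof (cases "\<exists>i\<in>{1..k}. dS (A i) x < \<rho>")
  case True
  then obtain i where i: "i \<in> {1..k}" "dS (A i) x < \<rho>" by auto
  have near: "F c y = c i * gi i y" if y: "y \<in> E" "d x y < \<rho> - dS (A i) x" for y
  proof (rule near_i[OF i(1) y(1)])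
    have "dS (A i) y \<le> d y x + dS (A i) x" by (rule dS_tri[OF A_sub[OF i(1)] A_ne[OF i(1)] y(1) x])
    thus "dS (A i) y < \<rho>" using y commute[of x y] by simp
  qed
  show ?thesis
  proof (cases "x \<in> AA")
    case True
    have xi: "x \<in> A i"
    proof (rule ccontr)
      assume nx: "x \<notin> A i"
      obtain j where j: "j \<in> {1..k}" "x \<in> A j" using True unfolding AA_def by auto
      have "j \<noteq> i" using nx j by auto
      have "2 * r \<le> dS (A i) x + dS (A j) x"
        by (rule sep_dS[OF i(1) j(1) _ A_ne[OF i(1)] A_ne[OF j(1)] x]) (use \<open>j \<noteq> i\<close> in auto)
      moreover have "dS (A j) x = 0" by (rule dS_zero[OF j(2) A_sub[OF j(1)]])
      ultimately show False using i(2) rho_le rho_pos by linarith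
    qed
    have dz: "dS (A i) x = 0" by (rule dS_zero[OF xi A_sub[OF i(1)]])
    have Fx: "F c x = c i" using F_X[of i x c] xi i unfolding X_def by auto
    have "local_lip E d (F c) x \<le> ennreal 0"
    proof (rule const_near[of "\<rho>/4"])
      show "0 < \<rho>/4" using rho_pos by simp
      fix y assume y: "y \<in> E" "d x y < \<rho>/4"
      have "dS (A i) y \<le> d y x + dS (A i) x" by (rule dS_tri[OF A_sub[OF i(1)] A_ne[OF i(1)] y(1) x])
      hence dy: "dS (A i) y \<le> \<rho>/4" using y dz commute[of x y] by simp
      have "F c y = c i * gi i y" by (rule near) (use y dz rho_pos in auto)
      thus "F c y = F c x" using gi_one[OF dy] Fx by simp
    qed
    thus ?thesis by (rule lip_from) (use B_nonneg in auto)
  next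
    case False
    obtain a where a: "a \<in> A i" "d x a < \<rho>" using i(2) dS_less_iff[OF A_ne[OF i(1)]] by blast
    have "a \<in> AA" using a i unfolding AA_def by auto
    hence xR1: "x \<in> R1" using a x False unfolding R1_def enl_def enlargement_def by auto
    have "local_lip E d (F c) x \<le> ennreal (4/\<rho> * \<bar>c i\<bar>)"
    proof (rule lin_near[of "\<rho> - dS (A i) x"])
      show "0 < \<rho> - dS (A i) x" using i by simp
      show "\<And>y. y \<in> E \<Longrightarrow> \<bar>gi i x - gi i y\<bar> \<le> 4 / \<rho> * d x y" using gi_lip[OF i(1) x] by auto
      show "\<And>y. y \<in> E \<Longrightarrow> d x y < \<rho> - dS (A i) x \<Longrightarrow> F c y = c i * gi i y" by (rule near)
      show "F c x = c i * gi i x" by (rule near) (use x i in simp_all)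
    qed
    moreover have "(4/\<rho> * \<bar>c i\<bar>)\<^sup>2 \<le> B c x"
    proof -
      have "(c i)\<^sup>2 \<le> S1 c" unfolding S1_def by (rule member_le_sum) (use i in auto)
      hence "16/\<rho>\<^sup>2 * (c i)\<^sup>2 \<le> 16/\<rho>\<^sup>2 * S1 c" by (rule mult_left_mono) simp
      moreover have "(4/\<rho> * \<bar>c i\<bar>)\<^sup>2 = 16/\<rho>\<^sup>2 * (c i)\<^sup>2" by (simp add: power_mult_distrib power_divide)
      moreover have "16/\<rho>\<^sup>2 * S1 c \<le> B c x" using xR1 unfolding B_def by simp
      ultimately show ?thesis by linarith
    qed
    ultimately show ?thesis using lip_from[of c x "4/\<rho> * \<bar>c i\<bar>"] rho_pos by simp
  qed
next
  case False
  hence far: "\<And>i. i \<in> {1..k} \<Longrightarrow> \<rho> \<le> dS (A i) x" by force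
  have near: "F c y = c 0 * g0 y" if y: "y \<in> E" "d x y < \<rho>/2" for y
  proof (rule far_all)
    fix i assume i: "i \<in> {1..k}"
    have "dS (A i) x \<le> d x y + dS (A i) y" by (rule dS_tri[OF A_sub[OF i] A_ne[OF i] x y(1)])
    thus "\<rho>/2 \<le> dS (A i) y" using far[OF i] y by simp
  qed
  have Fx: "F c x = c 0 * g0 x" by (rule near) (use x rho_pos in auto)
  show ?thesis
  proof (cases "x \<in> enl t")
    case True
    have dz: "dS (enl t) x = 0" by (rule dS_zero[OF True enl_sub])
    have "local_lip E d (F c) x \<le> ennreal 0"
    proof (rule const_near[of "\<rho>/4"])
      show "0 < \<rho>/4" using rho_pos by simp
      fix y assume y: "y \<in> E" "d x y < \<rho>/4"
      have "dS (enl t) y \<le> d y x + dS (enl t) x" by (rule dS_tri[OF enl_sub enlt_ne y(1) x])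
      hence dy: "dS (enl t) y \<le> \<rho>/4" using y dz commute[of x y] by simp
      have "F c y = c 0 * g0 y" by (rule near) (use y rho_pos in auto)
      thus "F c y = F c x" using g0_zero[OF dy] Fx g0_zero[of x] dz rho_pos by simp
    qed
    thus ?thesis by (rule lip_from) (use B_nonneg in auto)
  next
    case notin: False
    show ?thesis
    proof (cases "x \<in> enl (t+\<rho>)")
      case False
      hence x0: "x \<in> E - enl (t+\<rho>)" using x by auto
      have dfar: "\<rho> \<le> dS (enl t) x" by (rule out_far(1)[OF x0])
      have "local_lip E d (F c) x \<le> ennreal 0"
      proof (rule const_near[of "\<rho>/2"])
        show "0 < \<rho>/2" using rho_pos by simp
        fix y assume y: "y \<in> E" "d x y < \<rho>/2"
        have "dS (enl t) x \<le> d x y + dS (enl t) y" by (rule dS_tri[OF enl_sub enlt_ne x y(1)])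
        hence dy: "\<rho>/2 \<le> dS (enl t) y" using y dfar by simp
        have "F c y = c 0 * g0 y" by (rule near[OF y])
        moreover have "g0 x = 1" by (rule g0_one) (use dfar rho_pos in simp)
        ultimately show "F c y = F c x" using g0_one[OF dy] Fx by simp
      qed
      thus ?thesis by (rule lip_from) (use B_nonneg in auto)
    next
      case True
      hence xR0: "x \<in> R0" using notin unfolding R0_def by auto
      have "local_lip E d (F c) x \<le> ennreal (4/\<rho> * \<bar>c 0\<bar>)"
      proof (rule lin_near[of "\<rho>/2"])
        show "0 < \<rho>/2" using rho_pos by simp
        show "\<And>y. y \<in> E \<Longrightarrow> \<bar>g0 x - g0 y\<bar> \<le> 4 / \<rho> * d x y" using g0_lip[OF x] by auto
        show "\<And>y. y \<in> E \<Longrightarrow> d x y < \<rho>/2 \<Longrightarrow> F c y = c 0 * g0 y" by (rule near)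
        show "F c x = c 0 * g0 x" by (rule Fx)
      qed
      moreover have "(4/\<rho> * \<bar>c 0\<bar>)\<^sup>2 \<le> B c x"
      proof -
        have "(4/\<rho> * \<bar>c 0\<bar>)\<^sup>2 = 16/\<rho>\<^sup>2 * (c 0)\<^sup>2" by (simp add: power_mult_distrib power_divide)
        moreover have "16/\<rho>\<^sup>2 * (c 0)\<^sup>2 \<le> B c x" using xR0 S1_nonneg[of c] unfolding B_def by simp
        ultimately show ?thesis by linarith
      qed
      ultimately show ?thesis using lip_from[of c x "4/\<rho> * \<bar>c 0\<bar>"] rho_pos by simp
    qed
  qed
qed


lemma R_meas: "R0 \<in> sets \<mu>" "R1 \<in> sets \<mu>"
  unfolding R0_def R1_def using enl_meas AA_meas by auto

lemma measure_R1: "measure \<mu> R1 = s0 - SS \<rho>"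
  unfolding R1_def s0_def SS_def
  using P.finite_measure_Diff[OF enl_meas AA_meas AA_sub_enl[OF rho_pos]] by simp

lemma measure_R0: "measure \<mu> R0 = SS t - SS (t+\<rho>)"
  unfolding R0_def SS_def
  using P.finite_measure_Diff[OF enl_meas enl_meas enl_mono[of t "t+\<rho>"]] rho_pos by simp

definition Nv :: "(nat \<Rightarrow> real) \<Rightarrow> real" where
  "Nv c = 16/\<rho>\<^sup>2 * (c 0)\<^sup>2 * (SS t - SS (t+\<rho>)) + 16/\<rho>\<^sup>2 * S1 c * (s0 - SS \<rho>)"

lemma dir_le: "dirichlet E d \<mu> (F c) \<le> ennreal (Nv c)"
proof -
  define a where "a j = (if j = 0 then 16/\<rho>\<^sup>2 * (c 0)\<^sup>2 else 16/\<rho>\<^sup>2 * S1 c)" for j :: nat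
  define Y where "Y j = (if j = 0 then R0 else R1)" for j :: nat
  have "dirichlet E d \<mu> (F c) \<le> (\<integral>\<^sup>+x. ennreal (B c x) \<partial>\<mu>)"
    unfolding dirichlet_def by (rule nn_integral_mono) (use ll_bound sp in auto)
  also have "(\<integral>\<^sup>+x. ennreal (B c x) \<partial>\<mu>) = (\<integral>\<^sup>+x. ennreal (\<Sum>j\<in>{0::nat,1}. a j * indicator (Y j) x) \<partial>\<mu>)"
  proof (rule nn_integral_cong)
    fix x
    have two: "(\<Sum>j\<in>{0::nat,1}. f j) = f 0 + f 1" for f :: "nat \<Rightarrow> real" by simp
    show "ennreal (B c x) = ennreal (\<Sum>j\<in>{0::nat,1}. a j * indicator (Y j) x)"
      unfolding two[of "\<lambda>j. a j * indicator (Y j) x"] by (simp add: B_def a_def Y_def)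
  qed
  also have "\<dots> = ennreal (\<Sum>j\<in>{0::nat,1}. a j * measure \<mu> (Y j))"
    by (rule nn_sum_ind) (use R_meas S1_nonneg[of c] in \<open>auto simp: a_def Y_def\<close>)
  also have "\<dots> = ennreal (Nv c)"
  proof -
    have two: "(\<Sum>j\<in>{0::nat,1}. f j) = f 0 + f 1" for f :: "nat \<Rightarrow> real" by simp
    show ?thesis unfolding two[of "\<lambda>j. a j * measure \<mu> (Y j)"] a_def Y_def Nv_def
      by (simp add: measure_R0 measure_R1)
  qed
  finally show ?thesis .
qed

definition Mx where "Mx = max ((s0 - SS \<rho>) / s0) ((SS t - SS (t+\<rho>)) / SS (t+\<rho>))"

lemma Mx_nonneg: "0 \<le> Mx"
proof -
  have "0 \<le> (s0 - SS \<rho>) / s0" using SS_le_s0[OF rho_pos] s0_pos by (intro divide_nonneg_pos) auto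
  thus ?thesis unfolding Mx_def by (rule max.coboundedI1)
qed

lemma sum_split0: "(\<Sum>j\<le>k. f j) = f 0 + (\<Sum>j\<in>{1..k}. f j)"
proof -
  have "{..k} = insert 0 {1..k}" by auto
  thus ?thesis by simp
qed

lemma Nv_le: "Nv c \<le> 16/\<rho>\<^sup>2 * Mx * D c"
proof -
  have D_eq: "D c = (c 0)\<^sup>2 * SS (t+\<rho>) + (\<Sum>i\<in>{1..k}. (c i)\<^sup>2 * measure \<mu> (A i))"
    unfolding D_def by (subst sum_split0) (simp add: X_def measure_X0[unfolded X_def, simplified])
  have b: "SS t - SS (t+\<rho>) \<le> Mx * SS (t+\<rho>)"
  proof -
    have "(SS t - SS (t+\<rho>)) / SS (t+\<rho>) \<le> Mx" unfolding Mx_def by simp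
    thus ?thesis using St_pos by (simp add: divide_le_eq)
  qed
  have a: "s0 - SS \<rho> \<le> Mx * s0"
  proof -
    have "(s0 - SS \<rho>) / s0 \<le> Mx" unfolding Mx_def by simp
    thus ?thesis using s0_pos by (simp add: divide_le_eq)
  qed
  have "S1 c * (s0 - SS \<rho>) \<le> S1 c * (Mx * s0)" by (rule mult_left_mono[OF a S1_nonneg])
  also have "\<dots> = (\<Sum>i\<in>{1..k}. (c i)\<^sup>2 * (Mx * s0))" unfolding S1_def by (simp add: sum_distrib_right)
  also have "\<dots> \<le> (\<Sum>i\<in>{1..k}. (c i)\<^sup>2 * (Mx * measure \<mu> (A i)))"
    by (intro sum_mono mult_left_mono) (use Ai_ge Mx_nonneg in auto)
  finally have a2: "S1 c * (s0 - SS \<rho>) \<le> Mx * (\<Sum>i\<in>{1..k}. (c i)\<^sup>2 * measure \<mu> (A i))"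
    by (simp add: sum_distrib_left mult_ac)
  have b2: "(c 0)\<^sup>2 * (SS t - SS (t+\<rho>)) \<le> Mx * ((c 0)\<^sup>2 * SS (t+\<rho>))"
    using mult_left_mono[OF b, of "(c 0)\<^sup>2"] by (simp add: mult_ac)
  have "(c 0)\<^sup>2 * (SS t - SS (t+\<rho>)) + S1 c * (s0 - SS \<rho>) \<le> Mx * D c"
    using a2 b2 unfolding D_eq by (simp add: distrib_left)
  hence "16/\<rho>\<^sup>2 * ((c 0)\<^sup>2 * (SS t - SS (t+\<rho>)) + S1 c * (s0 - SS \<rho>)) \<le> 16/\<rho>\<^sup>2 * (Mx * D c)"
    by (rule mult_left_mono) simp
  moreover have "Nv c = 16/\<rho>\<^sup>2 * ((c 0)\<^sup>2 * (SS t - SS (t+\<rho>)) + S1 c * (s0 - SS \<rho>))"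
    unfolding Nv_def by (simp only: distrib_left mult.assoc)
  ultimately show ?thesis by (simp only: mult.assoc)
qed

lemma key: "lambda_k E d \<mu> k \<le> ennreal (16/\<rho>\<^sup>2 * Mx)"
proof -
  have gset: "g \<in> {g. (\<forall>i\<le>k. g i \<in> H1 E d \<mu>) \<and> L2_indep \<mu> k g}"
    using g_H1 indep by auto
  have "lambda_k E d \<mu> k \<le> (SUP c\<in>{c::nat \<Rightarrow> real. \<exists>i\<le>k. c i \<noteq> 0}.
          dirichlet E d \<mu> (\<lambda>x. \<Sum>i\<le>k. c i * g i x) / sq_norm \<mu> (\<lambda>x. \<Sum>i\<le>k. c i * g i x))"
    unfolding lambda_k_def by (rule INF_lower[OF gset])
  also have "\<dots> \<le> ennreal (16/\<rho>\<^sup>2 * Mx)"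
  proof (rule SUP_least)
    fix c :: "nat \<Rightarrow> real" assume c: "c \<in> {c. \<exists>i\<le>k. c i \<noteq> 0}"
    have Dp: "0 < D c" using D_pos c by auto
    have sqp: "0 < sq_norm \<mu> (F c)" using sq_ge[of c] Dp by (simp add: less_le_trans[of 0 "ennreal (D c)"])
    have "dirichlet E d \<mu> (F c) \<le> ennreal (Nv c)" by (rule dir_le)
    also have "\<dots> \<le> ennreal (D c * (16/\<rho>\<^sup>2 * Mx))" using Nv_le[of c] by (intro ennreal_leI) (simp add: mult_ac)
    also have "\<dots> = ennreal (D c) * ennreal (16/\<rho>\<^sup>2 * Mx)" by (rule ennreal_mult') (use Dp in simp)
    also have "\<dots> \<le> sq_norm \<mu> (F c) * ennreal (16/\<rho>\<^sup>2 * Mx)" by (rule mult_right_mono[OF sq_ge]) simp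
    finally have "dirichlet E d \<mu> (F c) / sq_norm \<mu> (F c) \<le> ennreal (16/\<rho>\<^sup>2 * Mx)"
      by (rule divide_le_posI_ennreal[OF sqp])
    thus "dirichlet E d \<mu> (\<lambda>x. \<Sum>i\<le>k. c i * g i x) / sq_norm \<mu> (\<lambda>x. \<Sum>i\<le>k. c i * g i x) \<le> ennreal (16/\<rho>\<^sup>2 * Mx)"
      by (simp add: F_eta)
  qed
  finally show ?thesis .
qed

end


lemma key2:
  assumes "0 < \<rho>" "\<rho> \<le> r" "\<rho> \<le> t" "0 < s0" "0 < SS (t+\<rho>)"
  shows "lambda_k E d \<mu> k \<le> ennreal (16/\<rho>\<^sup>2 * max ((s0 - SS \<rho>) / s0) ((SS t - SS (t+\<rho>)) / SS (t+\<rho>)))"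
  using key[OF assms] Mx_def[of \<rho> t] assms by simp

abbreviation "lam \<equiv> enn2real (lambda_k E d \<mu> k)"

lemma L_le:
  assumes "0 < \<rho>" "\<rho> \<le> r" "\<rho> \<le> t" "0 < s0" "0 < SS (t+\<rho>)"
  shows "lam * \<rho>\<^sup>2 / 16 \<le> max ((s0 - SS \<rho>) / s0) ((SS t - SS (t+\<rho>)) / SS (t+\<rho>))"
proof -
  define M where "M = max ((s0 - SS \<rho>) / s0) ((SS t - SS (t+\<rho>)) / SS (t+\<rho>))"
  have M0: "0 \<le> M"
  proof -
    have "0 \<le> (s0 - SS \<rho>) / s0" using SS_le_s0[OF assms(1)] assms(4) by (intro divide_nonneg_pos) auto
    thus ?thesis unfolding M_def by (rule max.coboundedI1)
  qed
  have "lam \<le> 16/\<rho>\<^sup>2 * M"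
    by (rule enn2real_leI) (use key2[OF assms] M0 in \<open>auto simp: M_def\<close>)
  hence "lam * \<rho>\<^sup>2 / 16 \<le> 16/\<rho>\<^sup>2 * M * \<rho>\<^sup>2 / 16"
    by (intro divide_right_mono mult_right_mono) auto
  also have "\<dots> = M" using assms(1) by (simp add: field_simps)
  finally show ?thesis unfolding M_def .
qed

lemma alpha_le1: "0 < s0 \<Longrightarrow> (s0 - SS \<rho>) / s0 \<le> 1"
  using SS_nonneg[of \<rho>] by (simp add: divide_le_eq)

lemma hyp_b:
  assumes r1: "0 < \<rho>" "\<rho> \<le> r" "\<rho> \<le> t" and L1: "1 < lam * \<rho>\<^sup>2 / 16"
  shows "SS (t+\<rho>) * (1 + lam * \<rho>\<^sup>2 / 16) \<le> SS t"
proof (cases "SS (t+\<rho>) = 0")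
  case True thus ?thesis using SS_nonneg[of t] by simp
next
  case False
  hence Sp: "0 < SS (t+\<rho>)" using SS_nonneg[of "t+\<rho>"] by simp
  have s0p: "0 < s0" using SS_le_s0[of "t+\<rho>"] Sp r1 by simp
  define L where "L = lam * \<rho>\<^sup>2 / 16"
  have "L \<le> max ((s0 - SS \<rho>) / s0) ((SS t - SS (t+\<rho>)) / SS (t+\<rho>))"
    unfolding L_def by (rule L_le[OF r1 s0p Sp])
  moreover have "(s0 - SS \<rho>) / s0 < L" by (rule le_less_trans[OF alpha_le1[OF s0p]]) (use L1 in \<open>simp add: L_def\<close>)
  ultimately have "L \<le> (SS t - SS (t+\<rho>)) / SS (t+\<rho>)" by (simp add: le_max_iff_disj)
  hence "L * SS (t+\<rho>) \<le> SS t - SS (t+\<rho>)" using Sp by (simp add: le_divide_eq)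
  thus ?thesis unfolding L_def[symmetric] by (simp add: algebra_simps)
qed

lemma hyp_a:
  assumes r1: "0 < \<rho>" "\<rho> \<le> r"
  shows "SS (2*\<rho>) * (1 + lam * \<rho>\<^sup>2 / 16) \<le> s0"
proof -
  define L where "L = lam * \<rho>\<^sup>2 / 16"
  have L0: "0 \<le> L" unfolding L_def by simp
  have e2: "\<rho> + \<rho> = 2*\<rho>" by simp
  show ?thesis
  proof (cases "SS (2*\<rho>) = 0")
    case True thus ?thesis using s0_nonneg by simp
  next
    case False
    hence Sp: "0 < SS (\<rho>+\<rho>)" using SS_nonneg[of "2*\<rho>"] by simp
    have s0p: "0 < s0" using SS_le_s0[of "\<rho>+\<rho>"] Sp r1 by simp
    have mono: "SS (2*\<rho>) \<le> SS \<rho>" by (rule SS_mono) (use r1 in simp)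
    have "L \<le> max ((s0 - SS \<rho>) / s0) ((SS \<rho> - SS (\<rho>+\<rho>)) / SS (\<rho>+\<rho>))"
      unfolding L_def by (rule L_le[OF r1 order_refl s0p Sp])
    hence "L \<le> (s0 - SS \<rho>) / s0 \<or> L \<le> (SS \<rho> - SS (2*\<rho>)) / SS (2*\<rho>)" unfolding e2 by (simp add: le_max_iff_disj)
    thus ?thesis
    proof
      assume "L \<le> (s0 - SS \<rho>) / s0"
      hence h: "SS \<rho> \<le> s0 * (1 - L)" using s0p by (simp add: le_divide_eq algebra_simps)
      have "SS (2*\<rho>) * (1 + L) \<le> SS \<rho> * (1 + L)" by (rule mult_right_mono[OF mono]) (use L0 in simp)
      also have "\<dots> \<le> s0 * (1 - L) * (1 + L)" by (rule mult_right_mono[OF h]) (use L0 in simp)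
      also have "\<dots> = s0 - s0 * L * L" by (simp add: algebra_simps)
      also have "\<dots> \<le> s0" using s0p L0 by simp
      finally show ?thesis unfolding L_def .
    next
      assume "L \<le> (SS \<rho> - SS (2*\<rho>)) / SS (2*\<rho>)"
      hence "L * SS (2*\<rho>) \<le> SS \<rho> - SS (2*\<rho>)" using Sp by (simp add: le_divide_eq)
      hence "SS (2*\<rho>) * (1 + L) \<le> SS \<rho>" by (simp add: algebra_simps)
      also have "\<dots> \<le> s0" by (rule SS_le_s0) (use r1 in simp)
      finally show ?thesis unfolding L_def .
    qed
  qed
qed

lemma lam_top: assumes "lambda_k E d \<mu> k = \<infinity>" shows "SS r = 0"
proof (rule ccontr)
  assume "SS r \<noteq> 0"
  hence Sp: "0 < SS (r/2 + r/2)" using SS_nonneg[of r] by simp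
  have s0p: "0 < s0" using SS_le_s0[of r] Sp rpos by simp
  have "lambda_k E d \<mu> k \<le> ennreal (16/(r/2)\<^sup>2 * max ((s0 - SS (r/2)) / s0) ((SS (r/2) - SS (r/2+r/2)) / SS (r/2+r/2)))"
    by (rule key2) (use rpos s0p Sp in auto)
  thus False using assms by (simp add: top_unique)
qed

lemma main: "measure \<mu> (enl r) \<ge> 1 - s0 * conc_factor (1/128) r (lambda_k E d \<mu> k)"
proof (cases "lambda_k E d \<mu> k = \<infinity>")
  case True
  thus ?thesis using lam_top unfolding conc_factor_def SS_def by simp
next
  case False
  have "SS r \<le> s0 * exp (- (1/128) * min (r\<^sup>2 * lam) (r * sqrt lam))"
  proof (rule decay[where S=SS])
    show "0 \<le> lam" by simp
    show "0 < r" by (rule rpos)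
    show "0 \<le> s0" by (rule s0_nonneg)
    show "\<And>u. 0 \<le> SS u" by (rule SS_nonneg)
    show "\<And>u v. 0 < v \<Longrightarrow> v \<le> u \<Longrightarrow> SS u \<le> SS v" by (rule SS_mono)
    show "\<And>u. 0 < u \<Longrightarrow> SS u \<le> s0" by (rule SS_le_s0)
    show "\<And>\<rho>. 0 < \<rho> \<Longrightarrow> \<rho> \<le> r \<Longrightarrow> SS (2*\<rho>) * (1 + lam * \<rho>\<^sup>2 / 16) \<le> s0" by (rule hyp_a)
    show "\<And>\<rho> t. 0 < \<rho> \<Longrightarrow> \<rho> \<le> r \<Longrightarrow> \<rho> \<le> t \<Longrightarrow> 1 < lam * \<rho>\<^sup>2 / 16 \<Longrightarrow> SS (t+\<rho>) * (1 + lam * \<rho>\<^sup>2 / 16) \<le> SS t"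
      by (rule hyp_b)
  qed
  thus ?thesis using False unfolding conc_factor_def SS_def by simp
qed

end


theorem theorem1p1:
  shows "\<exists>c::real. c > 0 \<and>
    (\<forall>(E::'a set) d (\<mu>::'a measure) (k::nat) (A::nat \<Rightarrow> 'a set) r.
       Metric_space E d \<and> Metric_space.mcomplete E d \<and>
       separable_space (Metric_space.mtopology E d) \<and>
       space \<mu> = E \<and> sets \<mu> = metric_borel E d \<and> prob_space \<mu> \<and>
       k \<ge> 1 \<and> (\<forall>i\<in>{1..k}. A i \<in> sets \<mu>) \<and>
       (\<forall>i\<in>{1..k}. \<forall>j\<in>{1..k}. i \<noteq> j \<longrightarrow> set_dist d (A i) (A j) > 0) \<and>
       (\<lambda>i. measure \<mu> (A i)) \<in> Delta k \<and>
       0 < r \<and>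
       (\<forall>i\<in>{1..k}. \<forall>j\<in>{1..k}. i \<noteq> j \<longrightarrow> ereal (2 * r) \<le> set_dist d (A i) (A j))
     \<longrightarrow> measure \<mu> (enlargement E d (\<Union>i\<in>{1..k}. A i) r)
           \<ge> 1 - (1 - measure \<mu> (\<Union>i\<in>{1..k}. A i)) * conc_factor c r (lambda_k E d \<mu> k))"
proof (rule exI[of _ "1/128"], rule conjI)
  show "(1/128::real) > 0" by simp
  show "\<forall>(E::'a set) d (\<mu>::'a measure) (k::nat) (A::nat \<Rightarrow> 'a set) r.
       Metric_space E d \<and> Metric_space.mcomplete E d \<and>
       separable_space (Metric_space.mtopology E d) \<and>
       space \<mu> = E \<and> sets \<mu> = metric_borel E d \<and> prob_space \<mu> \<and>
       k \<ge> 1 \<and> (\<forall>i\<in>{1..k}. A i \<in> sets \<mu>) \<and>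
       (\<forall>i\<in>{1..k}. \<forall>j\<in>{1..k}. i \<noteq> j \<longrightarrow> set_dist d (A i) (A j) > 0) \<and>
       (\<lambda>i. measure \<mu> (A i)) \<in> Delta k \<and>
       0 < r \<and>
       (\<forall>i\<in>{1..k}. \<forall>j\<in>{1..k}. i \<noteq> j \<longrightarrow> ereal (2 * r) \<le> set_dist d (A i) (A j))
     \<longrightarrow> measure \<mu> (enlargement E d (\<Union>i\<in>{1..k}. A i) r)
           \<ge> 1 - (1 - measure \<mu> (\<Union>i\<in>{1..k}. A i)) * conc_factor (1/128) r (lambda_k E d \<mu> k)"
  proof (intro allI impI)
    fix E :: "'a set" and d and \<mu> :: "'a measure" and k :: nat and A :: "nat \<Rightarrow> 'a set" and r :: real
    assume H: "Metric_space E d \<and> Metric_space.mcomplete E d \<and>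
       separable_space (Metric_space.mtopology E d) \<and>
       space \<mu> = E \<and> sets \<mu> = metric_borel E d \<and> prob_space \<mu> \<and>
       k \<ge> 1 \<and> (\<forall>i\<in>{1..k}. A i \<in> sets \<mu>) \<and>
       (\<forall>i\<in>{1..k}. \<forall>j\<in>{1..k}. i \<noteq> j \<longrightarrow> set_dist d (A i) (A j) > 0) \<and>
       (\<lambda>i. measure \<mu> (A i)) \<in> Delta k \<and>
       0 < r \<and>
       (\<forall>i\<in>{1..k}. \<forall>j\<in>{1..k}. i \<noteq> j \<longrightarrow> ereal (2 * r) \<le> set_dist d (A i) (A j))"
    have "Conc E d \<mu> k A r"
      unfolding Conc_def Conc_axioms_def using H by auto
    then interpret C: Conc E d \<mu> k A r .
    show "measure \<mu> (enlargement E d (\<Union>i\<in>{1..k}. A i) r)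
           \<ge> 1 - (1 - measure \<mu> (\<Union>i\<in>{1..k}. A i)) * conc_factor (1/128) r (lambda_k E d \<mu> k)"
      using C.main unfolding C.enl_def C.s0_def C.AA_def .
  qed
qed

end
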